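(* Let $F$ be a field of characteristic different from $2$, let $a_1,a_2\in F^\times$ be such that $E=F(\sqrt{a_1},\sqrt{a_2})$ is Galois over $F$ with $G=\mathrm{Gal}(E/F)\cong\mathbb Z/2\mathbb Z\times\mathbb Z/2\mathbb Z$, and let $\sigma_1,\sigma_2\in G$ be the generators with $\sigma_1(\sqrt{a_1})=\sqrt{a_1}$, $\sigma_1(\sqrt{a_2})=-\sqrt{a_2}$, $\sigma_2(\sqrt{a_2})=\sqrt{a_2}$, $\sigma_2(\sqrt{a_1})=-\sqrt{a_1}$. Then, in the $\mathbb Z[G]$-module $E^\times$, \[\ker(1-\sigma_1)(1-\sigma_2)=\ker(1-\sigma_1)\cdot\ker(1-\sigma_2).\]
   Context: $E^\times$ is a $\mathbb Z[G]$-module via $(\sum_g c_g g)\cdot\gamma=\prod_g g(\gamma)^{c_g}$. Thus $\ker(1-\sigma_i)=\{e\in E^\times: e/\sigma_i(e)=1\}$ and $\ker(1-\sigma_1)(1-\sigma_2)=\{e\in E^\times: e\,\sigma_1\sigma_2(e)=\sigma_1(e)\,\sigma_2(e)\}$. For subsets $A,B$, $A\cdot B=\{ab:a\in A,b\in B\}$. *)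

theory Defs
  imports "HOL-Algebra.Algebra" "HOL-Library.FuncSet"
begin

text \<open>Fields are modelled as subsets of an ambient field type 'a.\<close>

definition is_subfield :: "'a::field set \<Rightarrow> bool" where
  "is_subfield K \<longleftrightarrow> 0 \<in> K \<and> 1 \<in> K \<and>
     (\<forall>x\<in>K. \<forall>y\<in>K. x + y \<in> K \<and> x * y \<in> K) \<and>
     (\<forall>x\<in>K. - x \<in> K \<and> inverse x \<in> K)"

definition adjoin :: "'a::field set \<Rightarrow> 'a set \<Rightarrow> 'a set" where
  "adjoin F S = \<Inter> {K. is_subfield K \<and> F \<subseteq> K \<and> S \<subseteq> K}"

definition Gal_set :: "'a::field set \<Rightarrow> 'a set \<Rightarrow> ('a \<Rightarrow> 'a) set" where
  "Gal_set E F = {\<sigma> \<in> E \<rightarrow>\<^sub>E E. bij_betw \<sigma> E E \<and>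
      (\<forall>x\<in>E. \<forall>y\<in>E. \<sigma> (x + y) = \<sigma> x + \<sigma> y \<and> \<sigma> (x * y) = \<sigma> x * \<sigma> y) \<and>
      \<sigma> 1 = 1 \<and> (\<forall>x\<in>F. \<sigma> x = x)}"

definition Gal :: "'a::field set \<Rightarrow> 'a set \<Rightarrow> ('a \<Rightarrow> 'a) monoid" where
  "Gal E F = \<lparr>carrier = Gal_set E F, monoid.mult = (\<lambda>\<sigma> \<tau>. compose E \<sigma> \<tau>),
              one = (\<lambda>x\<in>E. x)\<rparr>"

definition is_galois :: "'a::field set \<Rightarrow> 'a set \<Rightarrow> bool" where
  "is_galois E F \<longleftrightarrow> F \<subseteq> E \<and> {x \<in> E. \<forall>\<sigma> \<in> Gal_set E F. \<sigma> x = x} = F"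

end

theory Submission
  imports Defs
begin

lemma adjoin_subfield: "is_subfield (adjoin F S)"
  unfolding is_subfield_def adjoin_def by (auto simp: is_subfield_def)

lemma adjoin_sup: fixes F S :: "'a::field set" shows "F \<subseteq> adjoin F S" "S \<subseteq> adjoin F S"
  unfolding adjoin_def by auto

lemma subfield_ops:
  assumes "is_subfield E"
  shows "0 \<in> E" "1 \<in> E" "x \<in> E \<Longrightarrow> y \<in> E \<Longrightarrow> x + y \<in> E"
    "x \<in> E \<Longrightarrow> y \<in> E \<Longrightarrow> x * y \<in> E" "x \<in> E \<Longrightarrow> - x \<in> E"
    "x \<in> E \<Longrightarrow> inverse x \<in> E" "x \<in> E \<Longrightarrow> y \<in> E \<Longrightarrow> x / y \<in> E"
  using assms unfolding is_subfield_def by (auto simp: divide_inverse)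

lemma Gal_compose:
  assumes E: "is_subfield E" and FE: "F \<subseteq> E"
    and s: "\<sigma> \<in> Gal_set E F" and t: "\<tau> \<in> Gal_set E F"
  shows "compose E \<sigma> \<tau> \<in> Gal_set E F"
proof -
  have sE: "\<And>x. x \<in> E \<Longrightarrow> \<sigma> x \<in> E" and tE: "\<And>x. x \<in> E \<Longrightarrow> \<tau> x \<in> E"
    using s t unfolding Gal_set_def by auto
  have bs: "bij_betw \<sigma> E E" and bt: "bij_betw \<tau> E E" using s t unfolding Gal_set_def by auto
  have "bij_betw (\<sigma> \<circ> \<tau>) E E" using bs bt bij_betw_trans by blast
  then have b: "bij_betw (compose E \<sigma> \<tau>) E E"
    by (rule bij_betw_cong[THEN iffD1, rotated]) (simp add: compose_def)
  show ?thesis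
    using s t b E FE sE tE subfield_ops[OF E] unfolding Gal_set_def
    by (auto simp: compose_def extensional_def subset_iff)
qed

lemma V4_facts:
  fixes V :: "(int \<times> int) monoid"
  defines "V \<equiv> integer_mod_group 2 \<times>\<times> integer_mod_group 2"
  shows "p \<in> carrier V \<Longrightarrow> p \<otimes>\<^bsub>V\<^esub> p = \<one>\<^bsub>V\<^esub>"
    "p \<in> carrier V \<Longrightarrow> q \<in> carrier V \<Longrightarrow> p \<otimes>\<^bsub>V\<^esub> q = q \<otimes>\<^bsub>V\<^esub> p"
    "p \<in> carrier V \<Longrightarrow> p \<otimes>\<^bsub>V\<^esub> p = p \<Longrightarrow> p = \<one>\<^bsub>V\<^esub>"
proof -
  have c: "carrier V = {(0,0),(0,1),(1,0),(1,1)}"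
    by (auto simp: V_def DirProd_def carrier_integer_mod_group)
  have m: "\<And>x1 x2 y1 y2. (x1,x2) \<otimes>\<^bsub>V\<^esub> (y1,y2) = ((x1+y1) mod 2, (x2+y2) mod 2)"
    by (simp add: V_def DirProd_def)
  have o: "\<one>\<^bsub>V\<^esub> = (0,0)" by (simp add: V_def DirProd_def)
  show "p \<in> carrier V \<Longrightarrow> p \<otimes>\<^bsub>V\<^esub> p = \<one>\<^bsub>V\<^esub>" using c m o by auto
  show "p \<in> carrier V \<Longrightarrow> q \<in> carrier V \<Longrightarrow> p \<otimes>\<^bsub>V\<^esub> q = q \<otimes>\<^bsub>V\<^esub> p" using c m o by auto
  show "p \<in> carrier V \<Longrightarrow> p \<otimes>\<^bsub>V\<^esub> p = p \<Longrightarrow> p = \<one>\<^bsub>V\<^esub>" using c m o by auto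
qed

theorem corollary1:
  fixes F :: "'a::field set" and a1 a2 r1 r2 :: 'a and \<sigma>1 \<sigma>2 :: "'a \<Rightarrow> 'a"
  assumes subF: "is_subfield F"
    and char: "(2::'a) \<noteq> 0"
    and a1: "a1 \<in> F" "a1 \<noteq> 0" and a2: "a2 \<in> F" "a2 \<noteq> 0"
    and r1: "r1 ^ 2 = a1" and r2: "r2 ^ 2 = a2"
    and gal: "is_galois (adjoin F {r1, r2}) F"
    and V4: "Gal (adjoin F {r1, r2}) F \<cong> (integer_mod_group 2 \<times>\<times> integer_mod_group 2)"
    and s1: "\<sigma>1 \<in> carrier (Gal (adjoin F {r1, r2}) F)" "\<sigma>1 r1 = r1" "\<sigma>1 r2 = - r2"
    and s2: "\<sigma>2 \<in> carrier (Gal (adjoin F {r1, r2}) F)" "\<sigma>2 r2 = r2" "\<sigma>2 r1 = - r1"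
  shows "{e \<in> adjoin F {r1, r2} - {0}. e * \<sigma>1 (\<sigma>2 e) = \<sigma>1 e * \<sigma>2 e}
       = {x * y | x y. x \<in> adjoin F {r1, r2} - {0} \<and> x / \<sigma>1 x = 1
                      \<and> y \<in> adjoin F {r1, r2} - {0} \<and> y / \<sigma>2 y = 1}"
proof -
  define E where "E = adjoin F {r1, r2}"
  define G where "G = Gal E F"
  define V where "V = integer_mod_group 2 \<times>\<times> integer_mod_group 2"
  have E: "is_subfield E" unfolding E_def by (rule adjoin_subfield)
  have FE: "F \<subseteq> E" and r1E: "r1 \<in> E" and r2E: "r2 \<in> E" using adjoin_sup(1)[of F "{r1,r2}"] adjoin_sup(2)[of "{r1,r2}" F] unfolding E_def by auto
  note ops = subfield_ops[OF E]
  have cG: "carrier G = Gal_set E F" by (simp add: G_def Gal_def)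
  have mG: "\<And>a b. a \<otimes>\<^bsub>G\<^esub> b = compose E a b" by (simp add: G_def Gal_def)
  have oG: "\<one>\<^bsub>G\<^esub> = (\<lambda>x\<in>E. x)" by (simp add: G_def Gal_def)
  have s1G: "\<sigma>1 \<in> Gal_set E F" and s2G: "\<sigma>2 \<in> Gal_set E F" using s1 s2 unfolding E_def Gal_def by auto
  have hom_props: "\<sigma> x \<in> E" "\<sigma> (x + y) = \<sigma> x + \<sigma> y" "\<sigma> (x * y) = \<sigma> x * \<sigma> y" "\<sigma> 1 = 1"
    if "\<sigma> \<in> Gal_set E F" "x \<in> E" "y \<in> E" for \<sigma> x y
    using that unfolding Gal_set_def by auto
  have inj: "inj_on \<sigma> E" if "\<sigma> \<in> Gal_set E F" for \<sigma>
    using that unfolding Gal_set_def bij_betw_def by auto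
  have zero: "\<sigma> 0 = 0" if "\<sigma> \<in> Gal_set E F" for \<sigma>
  proof -
    have "\<sigma> (0 + 0) = \<sigma> 0 + \<sigma> 0" using hom_props(2)[OF that ops(1) ops(1)] .
    then have "\<sigma> 0 + 0 = \<sigma> 0 + \<sigma> 0" by simp
    then show ?thesis by (metis add_left_cancel)
  qed
  have nz: "\<sigma> x \<noteq> 0" if "\<sigma> \<in> Gal_set E F" "x \<in> E" "x \<noteq> 0" for \<sigma> x
    using inj[OF that(1)] zero[OF that(1)] that ops(1) unfolding inj_on_def by metis
  have oGin: "(\<lambda>x\<in>E. x) \<in> Gal_set E F"
    using ops FE unfolding Gal_set_def by (auto simp: bij_betw_def inj_on_def)
  obtain h where h: "h \<in> iso G V" using V4 unfolding is_iso_def E_def G_def V_def by auto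
  have hhom: "\<And>a b. a \<in> carrier G \<Longrightarrow> b \<in> carrier G \<Longrightarrow> h (a \<otimes>\<^bsub>G\<^esub> b) = h a \<otimes>\<^bsub>V\<^esub> h b"
    and hc: "\<And>a. a \<in> carrier G \<Longrightarrow> h a \<in> carrier V" and hinj: "inj_on h (carrier G)"
    using h unfolding iso_def hom_def bij_betw_def by auto
  have compin: "\<And>a b. a \<in> carrier G \<Longrightarrow> b \<in> carrier G \<Longrightarrow> a \<otimes>\<^bsub>G\<^esub> b \<in> carrier G"
    using Gal_compose[OF E FE] cG mG by auto
  have oo: "\<one>\<^bsub>G\<^esub> \<otimes>\<^bsub>G\<^esub> \<one>\<^bsub>G\<^esub> = \<one>\<^bsub>G\<^esub>" unfolding mG oG
    by (auto simp: compose_def)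
  have oin: "\<one>\<^bsub>G\<^esub> \<in> carrier G" using oGin cG oG by simp
  have h1: "h \<one>\<^bsub>G\<^esub> = \<one>\<^bsub>V\<^esub>"
    using V4_facts(3)[folded V_def, OF hc[OF oin]] hhom[OF oin oin] oo by simp
  have sq: "g \<otimes>\<^bsub>G\<^esub> g = \<one>\<^bsub>G\<^esub>" if "g \<in> carrier G" for g
  proof -
    have "h (g \<otimes>\<^bsub>G\<^esub> g) = h \<one>\<^bsub>G\<^esub>"
      using hhom[OF that that] V4_facts(1)[folded V_def, OF hc[OF that]] h1 by simp
    then show ?thesis using hinj compin[OF that that] oin unfolding inj_on_def by blast
  qed
  have invol: "\<sigma> (\<sigma> x) = x" if "\<sigma> \<in> Gal_set E F" "x \<in> E" for \<sigma> x
  proof -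
    have "compose E \<sigma> \<sigma> x = (\<lambda>x\<in>E. x) x" using sq[of \<sigma>] that cG mG oG by simp
    then show ?thesis using that by (simp add: compose_def)
  qed
  have comm: "\<sigma>1 (\<sigma>2 x) = \<sigma>2 (\<sigma>1 x)" if "x \<in> E" for x
  proof -
    have a: "\<sigma>1 \<in> carrier G" "\<sigma>2 \<in> carrier G" using s1G s2G cG by auto
    have "h (\<sigma>1 \<otimes>\<^bsub>G\<^esub> \<sigma>2) = h (\<sigma>2 \<otimes>\<^bsub>G\<^esub> \<sigma>1)"
      using hhom[OF a] hhom[OF a(2) a(1)] V4_facts(2)[folded V_def, OF hc[OF a(1)] hc[OF a(2)]] by simp
    then have "compose E \<sigma>1 \<sigma>2 = compose E \<sigma>2 \<sigma>1"
      using hinj compin[OF a] compin[OF a(2) a(1)] mG unfolding inj_on_def by metis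
    then have "compose E \<sigma>1 \<sigma>2 x = compose E \<sigma>2 \<sigma>1 x" by simp
    then show ?thesis using that by (simp add: compose_def)
  qed
  have fix_iff: "(x / \<sigma> x = 1) \<longleftrightarrow> \<sigma> x = x" if "\<sigma> \<in> Gal_set E F" "x \<in> E" "x \<noteq> 0" for \<sigma> x
    using nz[OF that] that by (auto simp: field_simps)
  have "{e \<in> E - {0}. e * \<sigma>1 (\<sigma>2 e) = \<sigma>1 e * \<sigma>2 e}
       = {x * y | x y. x \<in> E - {0} \<and> x / \<sigma>1 x = 1
                      \<and> y \<in> E - {0} \<and> y / \<sigma>2 y = 1}"
  proof (rule equalityI; rule subsetI)
    fix e assume "e \<in> {e \<in> E - {0}. e * \<sigma>1 (\<sigma>2 e) = \<sigma>1 e * \<sigma>2 e}"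
    then have eE: "e \<in> E" and e0: "e \<noteq> 0" and cond: "e * \<sigma>1 (\<sigma>2 e) = \<sigma>1 e * \<sigma>2 e" by auto
    define s where "s = \<sigma>2 e"
    have sE: "s \<in> E" and s0: "s \<noteq> 0" using hom_props[OF s2G eE eE] nz[OF s2G eE e0] s_def by auto
    define w where "w = e / s"
    have wE: "w \<in> E" using ops(7)[OF eE sE] w_def by simp
    have s1s: "\<sigma>1 s \<noteq> 0" using nz[OF s1G sE s0] .
    have "\<sigma>1 w * \<sigma>1 s = \<sigma>1 e" using hom_props(3)[OF s1G wE sE] s0 w_def by simp
    moreover have "w * \<sigma>1 s = \<sigma>1 e" using cond s0 unfolding w_def s_def by (simp add: field_simps)
    ultimately have w1: "\<sigma>1 w = w" using s1s by (metis mult_right_cancel)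
    have "\<sigma>2 w * \<sigma>2 s = \<sigma>2 e" using hom_props(3)[OF s2G wE sE] s0 w_def by simp
    then have "\<sigma>2 w * e = s" using invol[OF s2G eE] s_def by simp
    then have w2: "\<sigma>2 w = s / e" using e0 by (simp add: field_simps)
    show "e \<in> {x * y | x y. x \<in> E - {0} \<and> x / \<sigma>1 x = 1 \<and> y \<in> E - {0} \<and> y / \<sigma>2 y = 1}"
    proof (cases "w = -1")
      case True
      then have es: "s = - e" using s0 unfolding w_def by (simp add: field_simps)
      have r10: "r1 \<noteq> 0" using r1 a1 by auto
      define y where "y = e / r1"
      have yE: "y \<in> E" using ops(7)[OF eE r1E] y_def by simp
      have "\<sigma>2 y * \<sigma>2 r1 = \<sigma>2 e" using hom_props(3)[OF s2G yE r1E] r10 y_def by simp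
      then have "\<sigma>2 y * r1 = e" using s2(3) es s_def by simp
      then have "\<sigma>2 y = e / r1" using r10 by (simp add: field_simps)
      then have "\<sigma>2 y = y" using y_def by simp
      moreover have "\<sigma>1 r1 = r1" by (rule s1(2))
      ultimately show ?thesis using fix_iff[OF s1G r1E r10] fix_iff[OF s2G yE] r1E r10 yE e0 y_def
        by (intro CollectI exI[of _ r1] exI[of _ y]) (auto simp: field_simps)
    next
      case False
      define x where "x = 1 + w"
      have x0: "x \<noteq> 0" using False unfolding x_def by (metis add.commute add_eq_0_iff)
      have xE: "x \<in> E" using ops(2) wE ops(3) x_def by auto
      have sx1: "\<sigma>1 x = x" using hom_props(2)[OF s1G ops(2) wE] hom_props(4)[OF s1G wE wE] w1 x_def by simp
      have sx2: "\<sigma>2 x = 1 + s / e" using hom_props(2)[OF s2G ops(2) wE] hom_props(4)[OF s2G wE wE] w2 x_def by simp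
      define y where "y = e / x"
      have yE: "y \<in> E" using ops(7)[OF eE xE] y_def by simp
      have es: "e + s \<noteq> 0" using x0 s0 unfolding x_def w_def by (simp add: field_simps)
      have yv: "y = e * s / (s + e)" using s0 unfolding y_def x_def w_def by (simp add: field_simps)
      have "\<sigma>2 y * \<sigma>2 x = \<sigma>2 e" using hom_props(3)[OF s2G yE xE] x0 y_def by simp
      then have "\<sigma>2 y * (e + s) = s * e" using sx2 e0 s_def by (simp add: field_simps)
      then have "\<sigma>2 y = s * e / (e + s)" using es by (simp add: field_simps)
      then have "\<sigma>2 y = y" unfolding yv by (simp add: ac_simps)
      moreover have y0: "y \<noteq> 0" using e0 x0 y_def by simp
      ultimately show ?thesis using fix_iff[OF s1G xE x0] fix_iff[OF s2G yE y0] sx1 xE x0 yE y_def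
        by (intro CollectI exI[of _ x] exI[of _ y]) (auto simp: field_simps)
    qed
  next
    fix e assume "e \<in> {x * y | x y. x \<in> E - {0} \<and> x / \<sigma>1 x = 1 \<and> y \<in> E - {0} \<and> y / \<sigma>2 y = 1}"
    then obtain x y where e: "e = x * y" and xE: "x \<in> E" "x \<noteq> 0" and yE: "y \<in> E" "y \<noteq> 0"
      and fx: "x / \<sigma>1 x = 1" and fy: "y / \<sigma>2 y = 1" by auto
    have x1: "\<sigma>1 x = x" using fix_iff[OF s1G xE] fx by simp
    have y2: "\<sigma>2 y = y" using fix_iff[OF s2G yE] fy by simp
    have x2E: "\<sigma>2 x \<in> E" using hom_props(1)[OF s2G xE(1) xE(1)] .
    have "\<sigma>1 (\<sigma>2 x) = \<sigma>2 x" using comm[OF xE(1)] x1 by simp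
    have eE: "e \<in> E" "e \<noteq> 0" using e xE yE ops(4) by auto
    have "\<sigma>1 (\<sigma>2 e) = \<sigma>1 (\<sigma>2 x) * \<sigma>1 y"
      using e hom_props(3)[OF s2G xE(1) yE(1)] y2 hom_props(3)[OF s1G x2E yE(1)] by simp
    moreover have "\<sigma>1 e = x * \<sigma>1 y" using e hom_props(3)[OF s1G xE(1) yE(1)] x1 by simp
    moreover have "\<sigma>2 e = \<sigma>2 x * y" using e hom_props(3)[OF s2G xE(1) yE(1)] y2 by simp
    ultimately have "e * \<sigma>1 (\<sigma>2 e) = \<sigma>1 e * \<sigma>2 e" using \<open>\<sigma>1 (\<sigma>2 x) = \<sigma>2 x\<close> e
      by (simp add: ac_simps)
    then show "e \<in> {e \<in> E - {0}. e * \<sigma>1 (\<sigma>2 e) = \<sigma>1 e * \<sigma>2 e}" using eE by simp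
  qed
  then show ?thesis unfolding E_def .
qed

end
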